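(* Let $X,K$ be topological spaces, $f:X\times K\to\mathbb R$ separately continuous, and $\phi:K\to C_p(X)$ given by $\phi(y)(x)=f(x,y)$. Suppose there exist a set $\Gamma\subseteq\mathbb R^X$ and a sequence $(\mathcal U_n)_{n\in\mathbb N}$ of countable covers of $K$ such that $X$ is $\sigma_\Gamma$-$\beta$-defavorable and $(\mathcal U_n)_{n\in\mathbb N}$ is countably pair complete with respect to $(\phi,\Gamma)$. Then for every $\varepsilon>0$ there is a residual subset $R_\varepsilon$ of $X$ such that for every $(x,y)\in R_\varepsilon\times K$ there are finitely many sets $F_i\in\mathcal U_i$, $i=0,\dots,k$, with $y\in\bigcap_{i\le k}F_i$, and a neighborhood $O$ of $(x,y)$ in $X\times K$ such that $|f(x,y)-f(x',y')|<\varepsilon$ for every $(x',y')\in O\cap\big(X\times\bigcap_{i\le k}F_i\big)$.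
   Context: $f$ is separately continuous if $f(x,\cdot)$ and $f(\cdot,y)$ are continuous for all $x\in X$, $y\in K$. $C_p(X)$ is the space of real continuous functions on $X$ with the pointwise convergence topology; $\mathbb R^X$ carries the product topology. A decreasing sequence $(U_n)$ of subsets of $K$ is countably pair complete with respect to $(\phi,\Gamma)$ if for any sequences $(y_n),(z_n)$ with $y_n,z_n\in U_n$ for all $n$, the sequence $(\phi(y_n)-\phi(z_n))_n$ has at least one cluster point in $\mathbb R^X$ belonging to $\Gamma$. A sequence of covers $\mathcal U_n=\{U^n_k:k\in\mathbb N\}$ of $K$ is countably pair complete with respect to $(\phi,\Gamma)$ if for each $\sigma\in\mathbb N^{\mathbb N}$ the sequence $(\bigcap_{i\le n}U^i_{\sigma(i)})_{n}$ is. The game $\mathcal J_\Gamma$ on $X$: $\beta$ first chooses a nonempty open $V_0\subseteq X$, then $\alpha$ chooses a nonempty open $U_0\subseteq V_0$ and $a_0\in X$; at step $n+1$, $\beta$ chooses a nonempty open $V_{n+1}\subseteq U_n$ and $\alpha$ a nonempty open $U_{n+1}\subseteq V_{n+1}$ and $a_{n+1}\in X$. $\alpha$ wins iff for each $g\in\Gamma$ there is $t\in\bigcap_nU_n$ with $g(t)\in\overline{\{g(a_n):n\in\mathbb N\}}$. $X$ is $\sigma_\Gamma$-$\beta$-defavorable if $\beta$ has no winning strategy in $\mathcal J_\Gamma$. A set is residual if its complement is of first category. *)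

theory Defs
  imports "HOL-Analysis.Analysis"
begin

text \<open>R^X carries the product topology (instance of the function type in Function_Topology).\<close>

definition nowhere_dense :: "'a::topological_space set \<Rightarrow> bool" where
  "nowhere_dense S \<longleftrightarrow> interior (closure S) = {}"

definition first_category :: "'a::topological_space set \<Rightarrow> bool" where
  "first_category A \<longleftrightarrow> (\<exists>N :: nat \<Rightarrow> 'a set. (\<forall>n. nowhere_dense (N n)) \<and> A \<subseteq> (\<Union>n. N n))"

definition residual :: "'a::topological_space set \<Rightarrow> bool" where
  "residual R \<longleftrightarrow> first_category (- R)"

definition separately_continuous :: "('a::topological_space \<Rightarrow> 'b::topological_space \<Rightarrow> real) \<Rightarrow> bool" where
  "separately_continuous f \<longleftrightarrow> (\<forall>x. continuous_on UNIV (f x)) \<and> (\<forall>y. continuous_on UNIV (\<lambda>x. f x y))"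

definition seq_cluster_point :: "(nat \<Rightarrow> 'a::topological_space) \<Rightarrow> 'a \<Rightarrow> bool" where
  "seq_cluster_point s z \<longleftrightarrow> (\<forall>W. open W \<longrightarrow> z \<in> W \<longrightarrow> (\<exists>\<^sub>F n in sequentially. s n \<in> W))"

definition seq_pair_complete ::
  "('b \<Rightarrow> ('a \<Rightarrow> real)) \<Rightarrow> ('a \<Rightarrow> real) set \<Rightarrow> (nat \<Rightarrow> 'b set) \<Rightarrow> bool" where
  "seq_pair_complete \<phi> \<Gamma> V \<longleftrightarrow>
     (\<forall>y z :: nat \<Rightarrow> 'b. (\<forall>n. y n \<in> V n \<and> z n \<in> V n) \<longrightarrow>
        (\<exists>g\<in>\<Gamma>. seq_cluster_point (\<lambda>n. \<phi> (y n) - \<phi> (z n)) g))"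

text \<open>Covers: U n k is the k-th member of the n-th countable cover.\<close>
definition covers_pair_complete ::
  "('b \<Rightarrow> ('a \<Rightarrow> real)) \<Rightarrow> ('a \<Rightarrow> real) set \<Rightarrow> (nat \<Rightarrow> nat \<Rightarrow> 'b set) \<Rightarrow> bool" where
  "covers_pair_complete \<phi> \<Gamma> U \<longleftrightarrow>
     (\<forall>\<sigma> :: nat \<Rightarrow> nat. seq_pair_complete \<phi> \<Gamma> (\<lambda>n. \<Inter>i\<in>{..n}. U i (\<sigma> i)))"

text \<open>The game J_Gamma. A history is the list of alpha's moves (U_0,a_0),...,(U_n,a_n);
  a strategy of beta maps histories to beta's next move (the empty history gives V_0).\<close>
definition legal_history :: "(('a::topological_space set \<times> 'a) list \<Rightarrow> 'a set) \<Rightarrow> ('a set \<times> 'a) list \<Rightarrow> bool" where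
  "legal_history s h \<longleftrightarrow>
     (\<forall>i<length h. open (fst (h ! i)) \<and> fst (h ! i) \<noteq> {} \<and> fst (h ! i) \<subseteq> s (take i h))"

definition beta_strategy :: "(('a::topological_space set \<times> 'a) list \<Rightarrow> 'a set) \<Rightarrow> bool" where
  "beta_strategy s \<longleftrightarrow> open (s []) \<and> s [] \<noteq> {} \<and>
     (\<forall>h. legal_history s h \<and> h \<noteq> [] \<longrightarrow> open (s h) \<and> s h \<noteq> {} \<and> s h \<subseteq> fst (last h))"

definition play_follows :: "(('a::topological_space set \<times> 'a) list \<Rightarrow> 'a set) \<Rightarrow> (nat \<Rightarrow> 'a set) \<Rightarrow> (nat \<Rightarrow> 'a) \<Rightarrow> bool" where
  "play_follows s U a \<longleftrightarrow>
     (\<forall>n. open (U n) \<and> U n \<noteq> {} \<and> U n \<subseteq> s (map (\<lambda>i. (U i, a i)) [0..<n]))"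

definition alpha_wins :: "('a \<Rightarrow> real) set \<Rightarrow> (nat \<Rightarrow> 'a set) \<Rightarrow> (nat \<Rightarrow> 'a) \<Rightarrow> bool" where
  "alpha_wins \<Gamma> U a \<longleftrightarrow>
     (\<forall>g\<in>\<Gamma>. \<exists>t\<in>(\<Inter>n. U n). g t \<in> closure {g (a n) | n. True})"

definition sigma_beta_defavorable :: "('a::topological_space \<Rightarrow> real) set \<Rightarrow> bool" where
  "sigma_beta_defavorable \<Gamma> \<longleftrightarrow>
     \<not> (\<exists>s. beta_strategy s \<and> (\<forall>U a. play_follows s U a \<longrightarrow> \<not> alpha_wins \<Gamma> U a))"

end

theory Submission
  imports Defs
begin


lemma nowhere_denseI:
  assumes "\<And>V. open V \<Longrightarrow> V \<noteq> {} \<Longrightarrow> \<exists>W. open W \<and> W \<noteq> {} \<and> W \<subseteq> V \<and> W \<inter> S = {}"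
  shows "nowhere_dense S"
proof -
  let ?T = "interior (closure S)"
  { assume "?T \<noteq> {}"
    then obtain W where W: "open W" "W \<noteq> {}" "W \<subseteq> ?T" "W \<inter> S = {}"
      using assms[of ?T] by auto
    then have "W \<inter> closure S = {}" using open_Int_closure_eq_empty by blast
    moreover have "W \<subseteq> closure S" using W(3) interior_subset by blast
    ultimately have False using W(2) by blast }
  then show ?thesis unfolding nowhere_dense_def by blast
qed

lemma nowhere_denseD:
  assumes "nowhere_dense S" "open V" "V \<noteq> {}"
  shows "\<exists>W. open W \<and> W \<noteq> {} \<and> W \<subseteq> V \<and> W \<inter> S = {}"
proof (intro exI conjI)
  show "open (V - closure S)" using assms(2) by (intro open_Diff) simp_all
  show "V - closure S \<noteq> {}"
  proof
    assume "V - closure S = {}"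
    then have "V \<subseteq> closure S" by simp
    then have "V \<subseteq> interior (closure S)" using assms(2) by (rule interior_maximal)
    then show False using assms(1,3) unfolding nowhere_dense_def by simp
  qed
  show "V - closure S \<subseteq> V" by blast
  show "(V - closure S) \<inter> S = {}" using closure_subset by blast
qed

lemma nowhere_dense_subset: "nowhere_dense S \<Longrightarrow> T \<subseteq> S \<Longrightarrow> nowhere_dense T"
  unfolding nowhere_dense_def
proof -
  assume a: "interior (closure S) = {}" "T \<subseteq> S"
  have "interior (closure T) \<subseteq> interior (closure S)" by (intro interior_mono closure_mono a(2))
  then show "interior (closure T) = {}" using a(1) by simp
qed

lemma nowhere_dense_closure_diff:
  assumes "open Ob" shows "nowhere_dense (closure Ob - Ob)"
proof (rule nowhere_denseI)
  fix V :: "'a set" assume V: "open V" "V \<noteq> {}"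
  show "\<exists>W. open W \<and> W \<noteq> {} \<and> W \<subseteq> V \<and> W \<inter> (closure Ob - Ob) = {}"
  proof (cases "V \<inter> Ob = {}")
    case True
    then have "V \<inter> closure Ob = {}" using V(1) by (simp add: open_Int_closure_eq_empty)
    then have "V \<inter> (closure Ob - Ob) = {}" by blast
    then show ?thesis using V by blast
  next
    case False
    have "open (V \<inter> Ob)" using V(1) assms by (rule open_Int)
    moreover have "(V \<inter> Ob) \<inter> (closure Ob - Ob) = {}" by blast
    moreover have "V \<inter> Ob \<subseteq> V" by blast
    ultimately show ?thesis using False by blast
  qed
qed

lemma nowhere_dense_frontier_closed:
  assumes "closed C" shows "nowhere_dense (C - interior C)"
proof (rule nowhere_denseI)
  fix V :: "'a set" assume V: "open V" "V \<noteq> {}"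
  show "\<exists>W. open W \<and> W \<noteq> {} \<and> W \<subseteq> V \<and> W \<inter> (C - interior C) = {}"
  proof (cases "V \<subseteq> C")
    case True
    then have "V \<subseteq> interior C" using V(1) by (rule interior_maximal)
    then have "V \<inter> (C - interior C) = {}" by blast
    then show ?thesis using V by blast
  next
    case False
    have "open (V - C)" using V(1) assms by (rule open_Diff)
    moreover have "V - C \<noteq> {}" using False by blast
    moreover have "(V - C) \<inter> (C - interior C) = {}" by blast
    moreover have "V - C \<subseteq> V" by blast
    ultimately show ?thesis by blast
  qed
qed

lemma first_category_subset: "first_category A \<Longrightarrow> B \<subseteq> A \<Longrightarrow> first_category B"
  unfolding first_category_def by blast

lemma first_category_nowhere_dense: "nowhere_dense A \<Longrightarrow> first_category A"
  unfolding first_category_def by (intro exI[of _ "\<lambda>_. A"]) auto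

lemma first_category_empty: "first_category {}"
  by (rule first_category_nowhere_dense) (simp add: nowhere_dense_def)

lemma first_category_Un: "first_category A \<Longrightarrow> first_category B \<Longrightarrow> first_category (A \<union> B)"
proof -
  assume "first_category A" "first_category B"
  then obtain N M :: "nat \<Rightarrow> 'a set" where N: "\<forall>n. nowhere_dense (N n)" "A \<subseteq> (\<Union>n. N n)"
    and M: "\<forall>n. nowhere_dense (M n)" "B \<subseteq> (\<Union>n. M n)" unfolding first_category_def by metis
  define L where "L n = (if even n then N (n div 2) else M (n div 2))" for n
  have "\<forall>n. nowhere_dense (L n)" using N M by (auto simp: L_def)
  moreover have "A \<union> B \<subseteq> (\<Union>n. L n)"
  proof
    fix x assume "x \<in> A \<union> B"
    then show "x \<in> (\<Union>n. L n)"
    proof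
      assume "x \<in> A" then obtain n where "x \<in> N n" using N by blast
      then have "x \<in> L (2*n)" by (simp add: L_def)
      then show ?thesis by blast
    next
      assume "x \<in> B" then obtain n where "x \<in> M n" using M by blast
      then have "x \<in> L (2*n+1)" by (simp add: L_def)
      then show ?thesis by blast
    qed
  qed
  ultimately show ?thesis unfolding first_category_def by (intro exI[of _ L]) simp
qed

lemma first_category_UN_nat:
  assumes "\<And>n::nat. first_category (A n)" shows "first_category (\<Union>n. A n)"
proof -
  have "\<forall>n. \<exists>N::nat\<Rightarrow>_. (\<forall>m. nowhere_dense (N m)) \<and> A n \<subseteq> (\<Union>m. N m)"
  proof
    fix n from assms[of n] show "\<exists>N::nat\<Rightarrow>_. (\<forall>m. nowhere_dense (N m)) \<and> A n \<subseteq> (\<Union>m. N m)"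
      unfolding first_category_def .
  qed
  from choice[OF this] obtain N where N: "\<And>n. (\<forall>m::nat. nowhere_dense (N n m)) \<and> A n \<subseteq> (\<Union>m. N n m)"
    by blast
  define L where "L j = (case prod_decode j of (n, m) \<Rightarrow> N n m)" for j
  have L1: "\<forall>j. nowhere_dense (L j)"
  proof
    fix j show "nowhere_dense (L j)"
    proof (cases "prod_decode j")
      case (Pair n m) then show ?thesis using N[of n] by (simp add: L_def)
    qed
  qed
  have L2: "(\<Union>n. A n) \<subseteq> (\<Union>j. L j)"
  proof
    fix x assume "x \<in> (\<Union>n. A n)"
    then obtain n where "x \<in> A n" by blast
    then obtain m where "x \<in> N n m" using N[of n] by blast
    then have "x \<in> L (prod_encode (n, m))" by (simp add: L_def)
    then show "x \<in> (\<Union>j. L j)" by blast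
  qed
  show ?thesis unfolding first_category_def by (rule exI[of _ L]) (use L1 L2 in blast)
qed

lemma first_category_UN_countable:
  fixes A :: "'i::countable \<Rightarrow> 'a::topological_space set"
  assumes "\<And>i. first_category (A i)" shows "first_category (\<Union>i. A i)"
proof -
  have "(\<Union>i. A i) = (\<Union>n. A (from_nat n))"
  proof
    show "(\<Union>i. A i) \<subseteq> (\<Union>n. A (from_nat n))"
    proof
      fix x assume "x \<in> (\<Union>i. A i)"
      then obtain i where "x \<in> A i" by blast
      then have "x \<in> A (from_nat (to_nat i))" by simp
      then show "x \<in> (\<Union>n. A (from_nat n))" by blast
    qed
  qed blast
  then show ?thesis using first_category_UN_nat[of "\<lambda>n. A (from_nat n)"] assms by simp
qed

definition Dset :: "'a::topological_space set \<Rightarrow> 'a set" where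
  "Dset A = {x. \<forall>W. open W \<and> x \<in> W \<longrightarrow> \<not> first_category (A \<inter> W)}"

lemma banach_local:
  fixes A :: "'a::topological_space set"
  defines "L \<equiv> \<Union>{W. open W \<and> first_category (A \<inter> W)}"
  shows "first_category (A \<inter> L)"
proof -
  define Fam where "Fam = {\<W>. \<W> \<subseteq> {W. open W \<and> W \<noteq> {} \<and> first_category (A \<inter> W)} \<and>
      (\<forall>W1\<in>\<W>. \<forall>W2\<in>\<W>. W1 \<noteq> W2 \<longrightarrow> W1 \<inter> W2 = {})}"
  have "\<forall>C\<in>chains Fam. \<Union>C \<in> Fam"
  proof
    fix C assume C: "C \<in> chains Fam"
    show "\<Union>C \<in> Fam" unfolding Fam_def
    proof (intro CollectI conjI ballI impI)
      have "C \<subseteq> Fam" using C unfolding chains_def by simp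
      then show "\<Union>C \<subseteq> {W. open W \<and> W \<noteq> {} \<and> first_category (A \<inter> W)}"
        unfolding Fam_def by blast
    next
      fix W1 W2 assume "W1 \<in> \<Union>C" "W2 \<in> \<Union>C" "W1 \<noteq> W2"
      then obtain c1 c2 where c: "c1 \<in> C" "c2 \<in> C" "W1 \<in> c1" "W2 \<in> c2" by blast
      have CF: "C \<subseteq> Fam" and ch: "chain\<^sub>\<subseteq> C" using C unfolding chains_def by simp_all
      have "c1 \<subseteq> c2 \<or> c2 \<subseteq> c1" using ch c(1,2) unfolding chain_subset_def by blast
      then obtain c where "c \<in> C" "W1 \<in> c" "W2 \<in> c" using c by blast
      then have "c \<in> Fam" using CF by blast
      then show "W1 \<inter> W2 = {}" using \<open>W1 \<in> c\<close> \<open>W2 \<in> c\<close> \<open>W1 \<noteq> W2\<close> unfolding Fam_def by blast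
    qed
  qed
  from Zorn_Lemma[OF this] obtain M where M: "M \<in> Fam" and Mmax: "\<forall>X\<in>Fam. M \<subseteq> X \<longrightarrow> X = M"
    by blast
  define Ob where "Ob = \<Union>M"
  have M1: "M \<subseteq> {W. open W \<and> W \<noteq> {} \<and> first_category (A \<inter> W)}"
    and M2: "\<forall>W1\<in>M. \<forall>W2\<in>M. W1 \<noteq> W2 \<longrightarrow> W1 \<inter> W2 = {}"
    using M unfolding Fam_def by simp_all
  have Mo: "\<And>W. W \<in> M \<Longrightarrow> open W \<and> W \<noteq> {} \<and> first_category (A \<inter> W)"
    using M1 by blast
  have Md: "\<And>W1 W2. W1 \<in> M \<Longrightarrow> W2 \<in> M \<Longrightarrow> W1 \<noteq> W2 \<Longrightarrow> W1 \<inter> W2 = {}"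
    using M2 by blast
  have oO: "open Ob" using Mo unfolding Ob_def by blast
  have LO: "L \<subseteq> closure Ob"
  proof
    fix x assume "x \<in> L"
    then obtain W where W: "open W" "first_category (A \<inter> W)" "x \<in> W" unfolding L_def by blast
    show "x \<in> closure Ob"
    proof (rule ccontr)
      assume nx: "x \<notin> closure Ob"
      define W' where "W' = W - closure Ob"
      have W'1: "open W'" unfolding W'_def using W(1) by (intro open_Diff) simp_all
      have W'2: "W' \<noteq> {}" unfolding W'_def using W(3) nx by blast
      have "A \<inter> W' \<subseteq> A \<inter> W" unfolding W'_def by blast
      with W(2) have W'3: "first_category (A \<inter> W')" by (rule first_category_subset)
      note W' = W'1 W'2 W'3
      have cs: "Ob \<subseteq> closure Ob" by (rule closure_subset)
      have dis: "\<And>V. V \<in> M \<Longrightarrow> V \<inter> W' = {}"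
      proof -
        fix V assume "V \<in> M"
        then have "V \<subseteq> Ob" unfolding Ob_def by blast
        then show "V \<inter> W' = {}" using cs unfolding W'_def by blast
      qed
      have "W' \<notin> M" using dis W'(2) by blast
      have "insert W' M \<in> Fam" unfolding Fam_def
      proof (intro CollectI conjI ballI impI)
        show "insert W' M \<subseteq> {W. open W \<and> W \<noteq> {} \<and> first_category (A \<inter> W)}"
          using Mo W' by blast
      next
        fix W1 W2 assume "W1 \<in> insert W' M" "W2 \<in> insert W' M" "W1 \<noteq> W2"
        then show "W1 \<inter> W2 = {}" using dis Md by blast
      qed
      then have "insert W' M = M" using Mmax by blast
      then show False using \<open>W' \<notin> M\<close> by blast
    qed
  qed
  have "\<forall>W\<in>M. \<exists>N::nat \<Rightarrow> 'a set. (\<forall>n. nowhere_dense (N n)) \<and> A \<inter> W \<subseteq> (\<Union>n. N n)"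
  proof
    fix W assume "W \<in> M"
    then have "first_category (A \<inter> W)" using Mo by blast
    then show "\<exists>N::nat \<Rightarrow> 'a set. (\<forall>n. nowhere_dense (N n)) \<and> A \<inter> W \<subseteq> (\<Union>n. N n)"
      unfolding first_category_def .
  qed
  from bchoice[OF this] obtain N where N: "\<And>W. W \<in> M \<Longrightarrow> (\<forall>n::nat. nowhere_dense (N W n)) \<and> A \<inter> W \<subseteq> (\<Union>n. N W n)"
    by blast
  define N' where "N' n = (\<Union>W\<in>M. N W n \<inter> W)" for n
  have "nowhere_dense (N' n)" for n
  proof (rule nowhere_denseI)
    fix V :: "'a set" assume V: "open V" "V \<noteq> {}"
    show "\<exists>W. open W \<and> W \<noteq> {} \<and> W \<subseteq> V \<and> W \<inter> N' n = {}"
    proof (cases "V \<inter> Ob = {}")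
      case True
      have "N' n \<subseteq> Ob" unfolding N'_def Ob_def by blast
      then have "V \<inter> N' n = {}" using True by blast
      then show ?thesis using V by blast
    next
      case False
      then obtain W0 where W0: "W0 \<in> M" "V \<inter> W0 \<noteq> {}" unfolding Ob_def by blast
      have nd: "nowhere_dense (N W0 n)" using N[OF W0(1)] by blast
      have oVW: "open (V \<inter> W0)" using V(1) Mo[OF W0(1)] by (intro open_Int) simp_all
      obtain W1 where W1: "open W1" "W1 \<noteq> {}" "W1 \<subseteq> V \<inter> W0" "W1 \<inter> N W0 n = {}"
        using nowhere_denseD[OF nd oVW W0(2)] by blast
      have "W1 \<inter> N' n = {}" unfolding N'_def
      proof (rule ccontr)
        assume "W1 \<inter> (\<Union>W\<in>M. N W n \<inter> W) \<noteq> {}"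
        then obtain x W where x: "x \<in> W1" "W \<in> M" "x \<in> N W n" "x \<in> W" by blast
        show False
        proof (cases "W = W0")
          case True then show False using x W1(4) by blast
        next
          case False then have "W \<inter> W0 = {}" using Md x(2) W0(1) by blast
          then show False using x W1(3) by blast
        qed
      qed
      then show ?thesis using W1 by blast
    qed
  qed
  then have "first_category (\<Union>n. N' n)" by (intro first_category_UN_nat first_category_nowhere_dense)
  moreover have "A \<inter> Ob \<subseteq> (\<Union>n. N' n)"
  proof
    fix x assume "x \<in> A \<inter> Ob"
    then obtain W where W: "W \<in> M" "x \<in> A" "x \<in> W" unfolding Ob_def by blast
    then have "x \<in> (\<Union>n. N W n)" using N[OF W(1)] by blast
    then obtain n where "x \<in> N W n" by blast
    then have "x \<in> N' n" unfolding N'_def using W by blast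
    then show "x \<in> (\<Union>n. N' n)" by blast
  qed
  ultimately have "first_category (A \<inter> Ob)" by (rule first_category_subset)
  moreover have "first_category (closure Ob - Ob)"
    by (rule first_category_nowhere_dense[OF nowhere_dense_closure_diff[OF oO]])
  ultimately have "first_category ((A \<inter> Ob) \<union> (closure Ob - Ob))" by (rule first_category_Un)
  moreover have "A \<inter> L \<subseteq> (A \<inter> Ob) \<union> (closure Ob - Ob)" using LO by blast
  ultimately show ?thesis by (rule first_category_subset)
qed

lemma banach:
  fixes A :: "'a::topological_space set"
  shows "first_category (A - interior (Dset A))"
proof -
  define L where "L = \<Union>{W. open W \<and> first_category (A \<inter> W)}"
  have D: "Dset A = - L" unfolding Dset_def L_def by blast
  have "closed (- L)" unfolding L_def by auto
  then have "first_category (- L - interior (- L))"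
    by (intro first_category_nowhere_dense nowhere_dense_frontier_closed)
  moreover have "first_category (A \<inter> L)" unfolding L_def by (rule banach_local)
  ultimately have "first_category ((- L - interior (- L)) \<union> (A \<inter> L))" by (rule first_category_Un)
  then show ?thesis by (rule first_category_subset) (auto simp: D)
qed



locale setup3 =
  fixes f :: "'a::topological_space \<Rightarrow> 'b::topological_space \<Rightarrow> real"
    and Uc :: "nat \<Rightarrow> nat \<Rightarrow> 'b set" and \<epsilon> :: real
  assumes sc: "separately_continuous f" and cov: "\<And>n. (\<Union>k. Uc n k) = UNIV" and epos: "\<epsilon> > 0"
begin

definition "cc = \<epsilon> / 3"
definition "dd = \<epsilon> / 6"

definition F :: "nat list \<Rightarrow> 'b set" where
  "F \<tau> = (\<Inter>i\<in>{..<length \<tau>}. Uc i (\<tau> ! i))"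

definition Q :: "nat list \<Rightarrow> 'a set \<Rightarrow> bool" where
  "Q \<tau> W \<longleftrightarrow> (\<exists>A. finite A \<and> (\<forall>y\<in>F \<tau>. \<forall>z\<in>F \<tau>. (\<forall>a\<in>A. \<bar>f a y - f a z\<bar> < dd) \<longrightarrow>
       (\<forall>t\<in>W. \<bar>f t y - f t z\<bar> \<le> cc)))"

definition G :: "nat list \<Rightarrow> 'a set" where
  "G \<tau> = \<Union>{W. open W \<and> Q \<tau> W}"

definition Bad :: "nat list \<Rightarrow> 'a set" where
  "Bad \<tau> = {x. \<exists>y\<in>F \<tau>. \<forall>\<tau>'. \<tau>' \<noteq> [] \<and> y \<in> F \<tau>' \<longrightarrow> x \<notin> G \<tau>'}"

definition P :: "nat list \<Rightarrow> 'a set" where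
  "P \<tau> = interior (Dset (Bad \<tau>))"

lemma cx: "continuous_on UNIV (\<lambda>x. f x y)" using sc unfolding separately_continuous_def by blast
lemma cy: "continuous_on UNIV (f x)" using sc unfolding separately_continuous_def by blast

lemma cc_pos: "cc > 0" and dd_pos: "dd > 0" and dd_cc: "dd < cc" and cc2: "cc + cc < \<epsilon>"
  using epos by (simp_all add: cc_def dd_def)

lemma cover: "\<exists>k. y \<in> Uc n k"
proof -
  have "y \<in> (\<Union>k. Uc n k)" using cov[of n] by simp
  then show ?thesis by blast
qed

lemma F_snoc: "F (\<tau> @ [k]) = F \<tau> \<inter> Uc (length \<tau>) k"
proof -
  have "{..<length (\<tau> @ [k])} = insert (length \<tau>) {..<length \<tau>}" by auto
  then show ?thesis unfolding F_def by (auto simp: nth_append)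
qed

lemma F_eq:
  assumes "length \<tau> = Suc n" "\<And>i. i \<le> n \<Longrightarrow> \<tau> ! i = \<sigma> i"
  shows "F \<tau> = (\<Inter>i\<in>{..n}. Uc i (\<sigma> i))"
proof -
  have "F \<tau> = (\<Inter>i\<in>{..n}. Uc i (\<tau> ! i))" unfolding F_def assms(1) lessThan_Suc_atMost ..
  also have "\<dots> = (\<Inter>i\<in>{..n}. Uc i (\<sigma> i))" by (rule INF_cong) (auto simp: assms(2))
  finally show ?thesis .
qed

lemma F_single: "F [k] = Uc 0 k"
  using F_eq[of "[k]" 0 "\<lambda>_. k"] by simp

lemma F_map: "F (map \<sigma> [0..<Suc n]) = (\<Inter>i\<in>{..n}. Uc i (\<sigma> i))"
  by (rule F_eq) (simp_all add: nth_map_upt del: upt_Suc)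

lemma open_G: "open (G \<tau>)"
  unfolding G_def by (intro open_Union) blast

lemma good:
  assumes "x \<in> G \<tau>" "y \<in> F \<tau>"
  shows "\<exists>W. open W \<and> (x, y) \<in> W \<and> (\<forall>x' y'. (x', y') \<in> W \<and> y' \<in> F \<tau> \<longrightarrow> \<bar>f x y - f x' y'\<bar> < \<epsilon>)"
proof -
  from assms(1) obtain W where W: "open W" "Q \<tau> W" "x \<in> W" unfolding G_def by blast
  from W(2) obtain A where A: "finite A"
    and QQ: "\<forall>y\<in>F \<tau>. \<forall>z\<in>F \<tau>. (\<forall>a\<in>A. \<bar>f a y - f a z\<bar> < dd) \<longrightarrow> (\<forall>t\<in>W. \<bar>f t y - f t z\<bar> \<le> cc)"
    unfolding Q_def by blast
  define W1 where "W1 = W \<inter> {x'. \<bar>f x' y - f x y\<bar> < cc}"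
  define N where "N = (\<Inter>a\<in>A. {y'. \<bar>f a y - f a y'\<bar> < dd})"
  have "open {x'. \<bar>f x' y - f x y\<bar> < cc}"
    by (rule open_Collect_less) (intro continuous_intros cx)+
  then have oW1: "open W1" unfolding W1_def using W(1) by (intro open_Int)
  have "\<forall>a\<in>A. open {y'. \<bar>f a y - f a y'\<bar> < dd}"
  proof
    fix a show "open {y'. \<bar>f a y - f a y'\<bar> < dd}"
      by (rule open_Collect_less) (intro continuous_intros cy)+
  qed
  then have oN: "open (N)" unfolding N_def using A by (intro open_INT)
  have xy: "(x, y) \<in> W1 \<times> N" unfolding W1_def N_def using W(3) cc_pos dd_pos by simp
  have "\<forall>x' y'. (x', y') \<in> W1 \<times> N \<and> y' \<in> F \<tau> \<longrightarrow> \<bar>f x y - f x' y'\<bar> < \<epsilon>"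
  proof (intro allI impI)
    fix x' y' assume H: "(x', y') \<in> W1 \<times> N \<and> y' \<in> F \<tau>"
    then have h1: "\<bar>f x' y - f x y\<bar> < cc" and xW: "x' \<in> W" unfolding W1_def by auto
    have "\<forall>a\<in>A. \<bar>f a y - f a y'\<bar> < dd" using H unfolding N_def by auto
    then have h2: "\<bar>f x' y - f x' y'\<bar> \<le> cc" using QQ assms(2) H xW by blast
    show "\<bar>f x y - f x' y'\<bar> < \<epsilon>" using h1 h2 cc2 by linarith
  qed
  then show ?thesis using oW1 oN xy by (intro exI[of _ "W1 \<times> N"]) (simp add: open_Times)
qed

lemma Bad_G: "\<tau> \<noteq> [] \<Longrightarrow> Bad \<tau> \<inter> G \<tau> = {}"
  unfolding Bad_def by blast

lemma Bad_split: "Bad \<tau> \<subseteq> (\<Union>k. Bad (\<tau> @ [k]))"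
proof
  fix x assume "x \<in> Bad \<tau>"
  then obtain y where y: "y \<in> F \<tau>" "\<forall>\<tau>'. \<tau>' \<noteq> [] \<and> y \<in> F \<tau>' \<longrightarrow> x \<notin> G \<tau>'"
    unfolding Bad_def by blast
  obtain k where "y \<in> Uc (length \<tau>) k" using cover by blast
  then have "y \<in> F (\<tau> @ [k])" using y(1) by (simp add: F_snoc)
  then have "x \<in> Bad (\<tau> @ [k])" using y(2) unfolding Bad_def by blast
  then show "x \<in> (\<Union>k. Bad (\<tau> @ [k]))" by blast
qed

lemma fc_BP: "first_category (Bad \<tau> - P \<tau>)"
  unfolding P_def by (rule banach)

lemma P_G: "\<tau> \<noteq> [] \<Longrightarrow> P \<tau> \<inter> G \<tau> = {}"
proof (rule ccontr)
  assume ne: "\<tau> \<noteq> []" and "P \<tau> \<inter> G \<tau> \<noteq> {}"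
  then obtain x where x: "x \<in> P \<tau>" "x \<in> G \<tau>" by blast
  have "x \<in> Dset (Bad \<tau>)" using x(1) interior_subset unfolding P_def by blast
  then have "\<not> first_category (Bad \<tau> \<inter> G \<tau>)" using x(2) open_G unfolding Dset_def by blast
  then show False using Bad_G[OF ne] first_category_empty by metis
qed

lemma P_child:
  assumes "open W" "W \<noteq> {}" "W \<subseteq> P \<tau>"
  shows "\<exists>k. W \<inter> P (\<tau> @ [k]) \<noteq> {}"
proof (rule ccontr)
  assume "\<not> (\<exists>k. W \<inter> P (\<tau> @ [k]) \<noteq> {})"
  then have e: "\<And>k. W \<inter> P (\<tau> @ [k]) = {}" by blast
  have "Bad \<tau> \<inter> W \<subseteq> (\<Union>k. Bad (\<tau> @ [k]) - P (\<tau> @ [k]))"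
  proof
    fix x assume x: "x \<in> Bad \<tau> \<inter> W"
    then obtain k where "x \<in> Bad (\<tau> @ [k])" using Bad_split by blast
    moreover have "x \<notin> P (\<tau> @ [k])" using e[of k] x by blast
    ultimately show "x \<in> (\<Union>k. Bad (\<tau> @ [k]) - P (\<tau> @ [k]))" by blast
  qed
  moreover have "first_category (\<Union>k. Bad (\<tau> @ [k]) - P (\<tau> @ [k]))"
    by (intro first_category_UN_nat fc_BP)
  ultimately have fc: "first_category (Bad \<tau> \<inter> W)" by (rule first_category_subset[rotated])
  obtain x where "x \<in> W" using assms(2) by blast
  then have "x \<in> Dset (Bad \<tau>)" using assms(3) interior_subset unfolding P_def by blast
  then show False using fc assms(1) \<open>x \<in> W\<close> unfolding Dset_def by blast
qed

lemma step:
  assumes ne: "\<tau> \<noteq> []" and W: "open W" "W \<noteq> {}" "W \<subseteq> P \<tau>" and A: "finite A"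
  shows "\<exists>V y z. open V \<and> V \<noteq> {} \<and> V \<subseteq> W \<and> y \<in> F \<tau> \<and> z \<in> F \<tau> \<and>
     (\<forall>a\<in>A. \<bar>f a y - f a z\<bar> < dd) \<and> (\<forall>t\<in>V. cc < \<bar>f t y - f t z\<bar>)"
proof -
  have nQ: "\<not> Q \<tau> W"
  proof
    assume "Q \<tau> W"
    then have "W \<subseteq> G \<tau>" using W(1) unfolding G_def by blast
    then show False using W(2,3) P_G[OF ne] by blast
  qed
  have "\<not> (\<forall>y\<in>F \<tau>. \<forall>z\<in>F \<tau>. (\<forall>a\<in>A. \<bar>f a y - f a z\<bar> < dd) \<longrightarrow> (\<forall>t\<in>W. \<bar>f t y - f t z\<bar> \<le> cc))"
    using nQ A unfolding Q_def by blast
  then obtain y z t where yz: "y \<in> F \<tau>" "z \<in> F \<tau>" "\<forall>a\<in>A. \<bar>f a y - f a z\<bar> < dd"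
    and t: "t \<in> W" "\<not> \<bar>f t y - f t z\<bar> \<le> cc" by blast
  define V where "V = W \<inter> {t. cc < \<bar>f t y - f t z\<bar>}"
  have "open {t. cc < \<bar>f t y - f t z\<bar>}"
    by (rule open_Collect_less) (intro continuous_intros cx)+
  then have "open V" unfolding V_def using W(1) by (intro open_Int)
  moreover have "t \<in> V" unfolding V_def using t by simp
  moreover have "V \<subseteq> W" "\<forall>t\<in>V. cc < \<bar>f t y - f t z\<bar>" unfolding V_def by auto
  ultimately show ?thesis using yz by blast
qed


lemma game:
  fixes \<phi> :: "'b \<Rightarrow> ('a \<Rightarrow> real)" and \<Gamma> :: "('a \<Rightarrow> real) set"
  assumes phi: "\<And>y. \<phi> y = (\<lambda>x. f x y)" and pc: "covers_pair_complete \<phi> \<Gamma> Uc"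
    and ne: "P [k0] \<noteq> {}"
  shows "\<exists>s. beta_strategy s \<and> (\<forall>Ug a. play_follows s Ug a \<longrightarrow> \<not> alpha_wins \<Gamma> Ug a)"
proof -
  define node where "node h = foldl (\<lambda>\<tau> m. \<tau> @ [SOME k. fst m \<inter> P (\<tau> @ [k]) \<noteq> {}]) [k0] h"
    for h :: "('a set \<times> 'a) list"
  define Cur where "Cur h = (if h = [] then UNIV else fst (last h))" for h :: "('a set \<times> 'a) list"
  define TP where "TP h V y z \<longleftrightarrow> open V \<and> V \<noteq> {} \<and> V \<subseteq> Cur h \<inter> P (node h) \<and> y \<in> F (node h) \<and>
     z \<in> F (node h) \<and> (\<forall>m\<in>set h. \<bar>f (snd m) y - f (snd m) z\<bar> < dd) \<and> (\<forall>t\<in>V. cc < \<bar>f t y - f t z\<bar>)"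
    for h V y z
  define trip where "trip h = (SOME vyz. TP h (fst vyz) (fst (snd vyz)) (snd (snd vyz)))" for h
  define s where "s h = fst (trip h)" for h
  define yy where "yy h = fst (snd (trip h))" for h
  define zz where "zz h = snd (snd (trip h))" for h
  have node_snoc: "node (h @ [m]) = node h @ [SOME k. fst m \<inter> P (node h @ [k]) \<noteq> {}]" for h m
    by (simp add: node_def)
  have node_Nil: "node [] = [k0]" by (simp add: node_def)
  have node_ne: "node h \<noteq> []" for h
  proof (cases h rule: rev_exhaust)
    case Nil then show ?thesis by (simp add: node_Nil)
  next
    case (snoc ys y) then show ?thesis by (simp add: node_snoc)
  qed
  have TPex: "TP h (s h) (yy h) (zz h)" if H: "open (Cur h)" "Cur h \<inter> P (node h) \<noteq> {}" for h
  proof -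
    have oW: "open (Cur h \<inter> P (node h))" using H(1) unfolding P_def by (intro open_Int) simp_all
    have fin: "finite (snd ` set h)" by simp
    obtain V y z where Vyz: "open V" "V \<noteq> {}" "V \<subseteq> Cur h \<inter> P (node h)" "y \<in> F (node h)" "z \<in> F (node h)"
      "\<forall>a\<in>snd ` set h. \<bar>f a y - f a z\<bar> < dd" "\<forall>t\<in>V. cc < \<bar>f t y - f t z\<bar>"
      using step[OF node_ne oW H(2) Int_lower2 fin] by blast
    have "TP h V y z" unfolding TP_def using Vyz by auto
    then have "\<exists>vyz. TP h (fst vyz) (fst (snd vyz)) (snd (snd vyz))" by (intro exI[of _ "(V, y, z)"]) simp
    from someI_ex[OF this] show ?thesis unfolding s_def yy_def zz_def trip_def .
  qed
  have legal_prefix: "legal_history s h" if "legal_history s (h @ [m])" for h m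
    unfolding legal_history_def
  proof (intro allI impI)
    fix i assume i: "i < length h"
    then have "open (fst ((h @ [m]) ! i)) \<and> fst ((h @ [m]) ! i) \<noteq> {} \<and> fst ((h @ [m]) ! i) \<subseteq> s (take i (h @ [m]))"
      using that unfolding legal_history_def by simp
    then show "open (fst (h ! i)) \<and> fst (h ! i) \<noteq> {} \<and> fst (h ! i) \<subseteq> s (take i h)"
      using i by (simp add: nth_append)
  qed
  have Inv: "legal_history s h \<Longrightarrow> open (Cur h) \<and> Cur h \<inter> P (node h) \<noteq> {}" for h
  proof (induction h rule: rev_induct)
    case Nil then show ?case using ne by (simp add: Cur_def node_Nil)
  next
    case (snoc m h)
    have lh: "legal_history s h" using snoc.prems by (rule legal_prefix)
    then have TPh: "TP h (s h) (yy h) (zz h)" using snoc.IH TPex by blast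
    have L: "\<And>i. i < length (h @ [m]) \<Longrightarrow> open (fst ((h @ [m]) ! i)) \<and> fst ((h @ [m]) ! i) \<noteq> {} \<and>
       fst ((h @ [m]) ! i) \<subseteq> s (take i (h @ [m]))"
      using snoc.prems unfolding legal_history_def by blast
    have "open (fst ((h @ [m]) ! length h)) \<and> fst ((h @ [m]) ! length h) \<noteq> {} \<and>
       fst ((h @ [m]) ! length h) \<subseteq> s (take (length h) (h @ [m]))"
      by (rule L) simp
    then have m: "open (fst m)" "fst m \<noteq> {}" "fst m \<subseteq> s h" by simp_all
    then have "fst m \<subseteq> P (node h)" using TPh unfolding TP_def by blast
    then have "\<exists>k. fst m \<inter> P (node h @ [k]) \<noteq> {}" using P_child m(1,2) by blast
    then have "fst m \<inter> P (node h @ [SOME k. fst m \<inter> P (node h @ [k]) \<noteq> {}]) \<noteq> {}" by (rule someI_ex)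
    then show ?case using m(1) by (simp add: Cur_def node_snoc)
  qed
  have TPs: "TP h (s h) (yy h) (zz h)" if "legal_history s h" for h
    using Inv[OF that] TPex by blast
  have "legal_history s []" unfolding legal_history_def by simp
  then have TP0: "TP [] (s []) (yy []) (zz [])" by (rule TPs)
  have bs1: "\<forall>h. legal_history s h \<and> h \<noteq> [] \<longrightarrow> open (s h) \<and> s h \<noteq> {} \<and> s h \<subseteq> fst (last h)"
  proof (intro allI impI)
    fix h assume h: "legal_history s h \<and> h \<noteq> []"
    then have "TP h (s h) (yy h) (zz h)" using TPs by blast
    then show "open (s h) \<and> s h \<noteq> {} \<and> s h \<subseteq> fst (last h)" using h unfolding TP_def Cur_def by auto
  qed
  have bs: "beta_strategy s" unfolding beta_strategy_def
    using TP0 bs1 unfolding TP_def by blast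
  have win: "\<not> alpha_wins \<Gamma> Ug a" if pf: "play_follows s Ug a" for Ug a
  proof
    assume aw: "alpha_wins \<Gamma> Ug a"
    define hist where "hist n = map (\<lambda>i. (Ug i, a i)) [0..<n]" for n
    have hist_Suc: "hist (Suc n) = hist n @ [(Ug n, a n)]" for n by (simp add: hist_def)
    have hist_0: "hist 0 = []" by (simp add: hist_def)
    have take_hist: "take i (hist n) = hist i" if "i \<le> n" for i n
      using that by (simp add: hist_def take_map)
    have pfn: "open (Ug n) \<and> Ug n \<noteq> {} \<and> Ug n \<subseteq> s (hist n)" for n
      using pf unfolding play_follows_def hist_def by blast
    have legal: "legal_history s (hist n)" for n
      unfolding legal_history_def
    proof (intro allI impI)
      fix i assume i: "i < length (hist n)"
      then have "i < n" by (simp add: hist_def)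
      then have "hist n ! i = (Ug i, a i)" by (simp add: hist_def)
      moreover have "take i (hist n) = hist i" using \<open>i < n\<close> by (intro take_hist) simp
      ultimately show "open (fst (hist n ! i)) \<and> fst (hist n ! i) \<noteq> {} \<and> fst (hist n ! i) \<subseteq> s (take i (hist n))"
        using pfn[of i] by simp
    qed
    have TPn: "TP (hist n) (s (hist n)) (yy (hist n)) (zz (hist n))" for n using TPs[OF legal] .
    define \<kappa> where "\<kappa> n = (SOME k. Ug n \<inter> P (node (hist n) @ [k]) \<noteq> {})" for n
    define \<sigma> where "\<sigma> n = (case n of 0 \<Rightarrow> k0 | Suc m \<Rightarrow> \<kappa> m)" for n
    have node_hist: "node (hist n) = map \<sigma> [0..<Suc n]" for n
    proof (induction n)
      case 0 then show ?case by (simp add: hist_0 node_Nil \<sigma>_def)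
    next
      case (Suc n)
      have "node (hist (Suc n)) = node (hist n) @ [\<kappa> n]" by (simp add: hist_Suc node_snoc \<kappa>_def)
      also have "\<dots> = map \<sigma> [0..<Suc n] @ [\<sigma> (Suc n)]" using Suc.IH by (simp add: \<sigma>_def del: upt_Suc)
      also have "\<dots> = map \<sigma> [0..<Suc (Suc n)]" by simp
      finally show ?case .
    qed
    define Y where "Y n = yy (hist n)" for n
    define Z where "Z n = zz (hist n)" for n
    have YZ: "Y n \<in> (\<Inter>i\<in>{..n}. Uc i (\<sigma> i)) \<and> Z n \<in> (\<Inter>i\<in>{..n}. Uc i (\<sigma> i))" for n
      using TPn[of n] unfolding TP_def Y_def Z_def node_hist F_map by blast
    have "seq_pair_complete \<phi> \<Gamma> (\<lambda>n. \<Inter>i\<in>{..n}. Uc i (\<sigma> i))"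
      using pc unfolding covers_pair_complete_def by blast
    then obtain g where g: "g \<in> \<Gamma>" "seq_cluster_point (\<lambda>n. \<phi> (Y n) - \<phi> (Z n)) g"
      unfolding seq_pair_complete_def using YZ by blast
    obtain t where t: "t \<in> (\<Inter>n. Ug n)" "g t \<in> closure {g (a n) |n. True}"
      using aw g(1) unfolding alpha_wins_def by blast
    have diff: "(\<phi> y - \<phi> z) x = f x y - f x z" for y z x by (simp add: phi)
    have gt: "cc < \<bar>f t (Y n) - f t (Z n)\<bar>" for n
    proof -
      have "t \<in> s (hist n)" using t(1) pfn[of n] by blast
      then show ?thesis using TPn[of n] unfolding TP_def Y_def Z_def by blast
    qed
    have close: "\<bar>f (a m) (Y n) - f (a m) (Z n)\<bar> < dd" if "m < n" for m n
    proof -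
      have "(Ug m, a m) \<in> set (hist n)" using that by (simp add: hist_def)
      then show ?thesis using TPn[of n] unfolding TP_def Y_def Z_def by fastforce
    qed
    have cont_ev: "continuous_on UNIV (\<lambda>h::'a \<Rightarrow> real. \<bar>h x\<bar>)" for x
      by (intro continuous_on_rabs continuous_on_product_coordinates)
    have cl1: "cc \<le> \<bar>g t\<bar>"
    proof (rule ccontr)
      assume "\<not> cc \<le> \<bar>g t\<bar>"
      then have "g \<in> {h. \<bar>h t\<bar> < cc}" by simp
      moreover have "open {h::'a \<Rightarrow> real. \<bar>h t\<bar> < cc}"
        by (rule open_Collect_less[OF cont_ev continuous_on_const])
      ultimately have "\<exists>\<^sub>F n in sequentially. (\<phi> (Y n) - \<phi> (Z n)) \<in> {h. \<bar>h t\<bar> < cc}"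
        using g(2) unfolding seq_cluster_point_def by blast
      then have "\<exists>\<^sub>F n in sequentially. \<bar>f t (Y n) - f t (Z n)\<bar> < cc" by (simp add: phi)
      moreover have "eventually (\<lambda>n. \<not> \<bar>f t (Y n) - f t (Z n)\<bar> < cc) sequentially"
        using gt by (intro always_eventually) (simp add: not_less less_imp_le)
      ultimately show False unfolding frequently_def by blast
    qed
    have cl2: "\<bar>g (a m)\<bar> \<le> dd" for m
    proof (rule ccontr)
      assume "\<not> \<bar>g (a m)\<bar> \<le> dd"
      then have "g \<in> {h. dd < \<bar>h (a m)\<bar>}" by simp
      moreover have "open {h::'a \<Rightarrow> real. dd < \<bar>h (a m)\<bar>}"
        by (rule open_Collect_less[OF continuous_on_const cont_ev])
      ultimately have "\<exists>\<^sub>F n in sequentially. (\<phi> (Y n) - \<phi> (Z n)) \<in> {h. dd < \<bar>h (a m)\<bar>}"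
        using g(2) unfolding seq_cluster_point_def by blast
      then have "\<exists>\<^sub>F n in sequentially. dd < \<bar>f (a m) (Y n) - f (a m) (Z n)\<bar>" by (simp add: phi)
      moreover have "eventually (\<lambda>n. \<not> dd < \<bar>f (a m) (Y n) - f (a m) (Z n)\<bar>) sequentially"
      proof -
        have "eventually (\<lambda>n. m < n) sequentially" by simp
        then show ?thesis by (rule eventually_mono) (use close in \<open>simp add: not_less less_imp_le\<close>)
      qed
      ultimately show False unfolding frequently_def by blast
    qed
    have "closed {r::real. \<bar>r\<bar> \<le> dd}"
      by (rule closed_Collect_le) (intro continuous_intros)+
    moreover have "{g (a n) |n. True} \<subseteq> {r::real. \<bar>r\<bar> \<le> dd}" using cl2 by blast
    ultimately have "closure {g (a n) |n. True} \<subseteq> {r::real. \<bar>r\<bar> \<le> dd}" by (rule closure_minimal[rotated])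
    then have "\<bar>g t\<bar> \<le> dd" using t(2) by blast
    then show False using cl1 dd_cc by linarith
  qed
  show ?thesis using bs win by blast
qed

end


theorem theorem3p1:
  fixes f :: "'a::topological_space \<Rightarrow> 'b::topological_space \<Rightarrow> real"
    and \<phi> :: "'b \<Rightarrow> ('a \<Rightarrow> real)"
    and \<Gamma> :: "('a \<Rightarrow> real) set"
    and U :: "nat \<Rightarrow> nat \<Rightarrow> 'b set"
  assumes "separately_continuous f"
    and "\<And>y. \<phi> y = (\<lambda>x. f x y)"
    and "\<And>n. (\<Union>k. U n k) = UNIV"
    and "sigma_beta_defavorable \<Gamma>"
    and "covers_pair_complete \<phi> \<Gamma> U"
  shows "\<forall>\<epsilon>>0. \<exists>R::'a set. residual R \<and>
           (\<forall>x\<in>R. \<forall>y. \<exists>(k::nat) (\<sigma>::nat \<Rightarrow> nat) (W::('a \<times> 'b) set).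
              y \<in> (\<Inter>i\<in>{..k}. U i (\<sigma> i)) \<and> open W \<and> (x, y) \<in> W \<and>
              (\<forall>x' y'. (x', y') \<in> W \<and> y' \<in> (\<Inter>i\<in>{..k}. U i (\<sigma> i)) \<longrightarrow>
                 \<bar>f x y - f x' y'\<bar> < \<epsilon>))"
proof (intro allI impI)
  fix \<epsilon> :: real assume ep: "\<epsilon> > 0"
  interpret S: setup3 f U \<epsilon> using assms(1,3) ep by unfold_locales
  define R where "R = - (\<Union>\<tau>::nat list. S.Bad \<tau> - S.P \<tau>)"
  have res: "residual R" unfolding residual_def R_def double_compl
    by (intro first_category_UN_countable S.fc_BP)
  have gp: "\<exists>\<tau>. \<tau> \<noteq> [] \<and> y \<in> S.F \<tau> \<and> x \<in> S.G \<tau>" if xR: "x \<in> R" for x y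
  proof (rule ccontr)
    assume nq: "\<not> (\<exists>\<tau>. \<tau> \<noteq> [] \<and> y \<in> S.F \<tau> \<and> x \<in> S.G \<tau>)"
    obtain k where "y \<in> U 0 k" using S.cover by blast
    then have "y \<in> S.F [k]" by (simp add: S.F_single)
    then have "x \<in> S.Bad [k]" using nq unfolding S.Bad_def by blast
    moreover have "x \<notin> S.Bad [k] - S.P [k]" using xR unfolding R_def by blast
    ultimately have "x \<in> S.P [k]" by blast
    then have "S.P [k] \<noteq> {}" by blast
    from S.game[OF assms(2) assms(5) this] show False
      using assms(4) unfolding sigma_beta_defavorable_def by blast
  qed
  show "\<exists>R::'a set. residual R \<and>
           (\<forall>x\<in>R. \<forall>y. \<exists>(k::nat) (\<sigma>::nat \<Rightarrow> nat) (W::('a \<times> 'b) set).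
              y \<in> (\<Inter>i\<in>{..k}. U i (\<sigma> i)) \<and> open W \<and> (x, y) \<in> W \<and>
              (\<forall>x' y'. (x', y') \<in> W \<and> y' \<in> (\<Inter>i\<in>{..k}. U i (\<sigma> i)) \<longrightarrow>
                 \<bar>f x y - f x' y'\<bar> < \<epsilon>))"
  proof (intro exI[of _ R] conjI ballI allI)
    show "residual R" by (rule res)
  next
    fix x y assume "x \<in> R"
    then obtain \<tau> where \<tau>: "\<tau> \<noteq> []" "y \<in> S.F \<tau>" "x \<in> S.G \<tau>" using gp by blast
    obtain W where W: "open W" "(x, y) \<in> W"
      "\<forall>x' y'. (x', y') \<in> W \<and> y' \<in> S.F \<tau> \<longrightarrow> \<bar>f x y - f x' y'\<bar> < \<epsilon>"
      using S.good[OF \<tau>(3) \<tau>(2)] by blast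
    define k where "k = length \<tau> - 1"
    have FF: "S.F \<tau> = (\<Inter>i\<in>{..k}. U i (\<tau> ! i))"
      by (rule S.F_eq) (use \<tau>(1) in \<open>simp_all add: k_def\<close>)
    show "\<exists>(k::nat) (\<sigma>::nat \<Rightarrow> nat) (W::('a \<times> 'b) set).
              y \<in> (\<Inter>i\<in>{..k}. U i (\<sigma> i)) \<and> open W \<and> (x, y) \<in> W \<and>
              (\<forall>x' y'. (x', y') \<in> W \<and> y' \<in> (\<Inter>i\<in>{..k}. U i (\<sigma> i)) \<longrightarrow>
                 \<bar>f x y - f x' y'\<bar> < \<epsilon>)"
      using \<tau>(2) W unfolding FF by blast
  qed
qed

end
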